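(* For every integer $n\ge 1$, $\mathfrak D^1_{2n}(231,4213)=\{(2,1,4,3,\dots,2n,2n-1)\}$, i.e. the only Dumont permutation of the first kind of length $2n$ avoiding both $231$ and $4213$ is the permutation $\pi$ with $\pi(2i-1)=2i$, $\pi(2i)=2i-1$ for $i=1,\dots,n$.
   Context: A Dumont permutation of the first kind of length $2n$ is a permutation $\pi\in\mathfrak S_{2n}$ such that for every $i=1,\dots,2n$: if $\pi(i)$ is even then $i<2n$ and $\pi(i)>\pi(i+1)$; if $\pi(i)$ is odd then $i=2n$ or $\pi(i)<\pi(i+1)$. $\mathfrak D^1_{2n}$ denotes the set of these. A permutation $\sigma$ contains a pattern $\tau\in\mathfrak S_k$ if some subsequence $(\sigma(i_1),\dots,\sigma(i_k))$, $i_1<\dots<i_k$, is order-isomorphic to $\tau$; otherwise $\sigma$ avoids $\tau$. $\mathfrak D^1_{2n}(T)$ denotes the set of permutations in $\mathfrak D^1_{2n}$ avoiding every pattern in $T$. Permutations are written in one-line notation. *)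

theory Defs
  imports "HOL-Combinatorics.Permutations"
begin

text \<open>Permutations of length m are functions nat => nat that permute {1..m}
(one-line notation: the values at 1, ..., m).\<close>

definition dumont1 :: "nat \<Rightarrow> (nat \<Rightarrow> nat) \<Rightarrow> bool" where
  "dumont1 n \<pi> \<longleftrightarrow> \<pi> permutes {1..2*n} \<and>
     (\<forall>i\<in>{1..2*n}.
        (even (\<pi> i) \<longrightarrow> i < 2*n \<and> \<pi> i > \<pi> (i+1)) \<and>
        (odd (\<pi> i) \<longrightarrow> i = 2*n \<or> \<pi> i < \<pi> (i+1)))"

text \<open>A pattern tau of length k is given as a list (tau(1), ..., tau(k)) of
values in {1..k}. sigma, a permutation of {1..m}, contains tau if there are
indices i_1 < ... < i_k in {1..m} with the subsequence order-isomorphic to tau.\<close>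

definition contains_pattern :: "nat \<Rightarrow> (nat \<Rightarrow> nat) \<Rightarrow> nat list \<Rightarrow> bool" where
  "contains_pattern m \<sigma> \<tau> \<longleftrightarrow>
     (\<exists>idx :: nat \<Rightarrow> nat. strict_mono_on {..<length \<tau>} idx \<and>
        (\<forall>a<length \<tau>. idx a \<in> {1..m}) \<and>
        (\<forall>a<length \<tau>. \<forall>b<length \<tau>. \<sigma> (idx a) < \<sigma> (idx b) \<longleftrightarrow> \<tau> ! a < \<tau> ! b))"

definition avoids_all :: "nat \<Rightarrow> (nat \<Rightarrow> nat) \<Rightarrow> nat list set \<Rightarrow> bool" where
  "avoids_all m \<sigma> T \<longleftrightarrow> (\<forall>\<tau>\<in>T. \<not> contains_pattern m \<sigma> \<tau>)"

definition dumont1_avoid :: "nat \<Rightarrow> nat list set \<Rightarrow> (nat \<Rightarrow> nat) set" where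
  "dumont1_avoid n T = {\<pi>. dumont1 n \<pi> \<and> avoids_all (2*n) \<pi> T}"

definition swap_pairs :: "nat \<Rightarrow> nat \<Rightarrow> nat" where
  "swap_pairs n i = (if i \<in> {1..2*n} then (if odd i then i + 1 else i - 1) else i)"

end

theory Submission imports Defs begin
lemma c231:
  assumes "a < b" "b < c" "1 \<le> a" "c \<le> m" "\<sigma> c < \<sigma> a" "\<sigma> a < \<sigma> b"
  shows "contains_pattern m \<sigma> [2,3,1]"
  unfolding contains_pattern_def
proof (intro exI[of _ "\<lambda>i. [a,b,c]!i"] conjI)
  show "strict_mono_on {..<length [2::nat,3,1]} (\<lambda>i. [a,b,c]!i)"
    unfolding strict_mono_on_def using assms
    by (auto simp: less_Suc_eq numeral_eq_Suc)
  show "\<forall>x<length [2::nat,3,1]. [a,b,c]!x \<in> {1..m}" using assms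
    by (auto simp: less_Suc_eq numeral_eq_Suc)
  show "\<forall>x<length [2::nat,3,1]. \<forall>y<length [2::nat,3,1].
     (\<sigma> ([a,b,c]!x) < \<sigma> ([a,b,c]!y)) = ([2::nat,3,1]!x < [2,3,1]!y)" using assms
    by (auto simp: less_Suc_eq numeral_eq_Suc)
qed
lemma c4213:
  assumes "a < b" "b < c" "c < d" "1 \<le> a" "d \<le> m" "\<sigma> c < \<sigma> b" "\<sigma> b < \<sigma> d" "\<sigma> d < \<sigma> a"
  shows "contains_pattern m \<sigma> [4,2,1,3]"
  unfolding contains_pattern_def
proof (intro exI[of _ "\<lambda>i. [a,b,c,d]!i"] conjI)
  show "strict_mono_on {..<length [4::nat,2,1,3]} (\<lambda>i. [a,b,c,d]!i)"
    unfolding strict_mono_on_def using assms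
    by (auto simp: less_Suc_eq numeral_eq_Suc)
  show "\<forall>x<length [4::nat,2,1,3]. [a,b,c,d]!x \<in> {1..m}" using assms
    by (auto simp: less_Suc_eq numeral_eq_Suc)
  show "\<forall>x<length [4::nat,2,1,3]. \<forall>y<length [4::nat,2,1,3].
     (\<sigma> ([a,b,c,d]!x) < \<sigma> ([a,b,c,d]!y)) = ([4::nat,2,1,3]!x < [4,2,1,3]!y)" using assms
    by (auto simp: less_Suc_eq numeral_eq_Suc)
qed

lemma sw_le: "swap_pairs n v \<le> v + 1" by (auto simp: swap_pairs_def)
lemma sw_ge: "swap_pairs n v \<ge> v - 1" by (auto simp: swap_pairs_def)
lemma sw_invol: "swap_pairs n (swap_pairs n v) = v"
  by (auto simp: swap_pairs_def split: if_splits; presburger)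
lemma sw_K: "even K \<Longrightarrow> 1 \<le> v \<Longrightarrow> v \<le> K \<Longrightarrow> K \<le> 2*n \<Longrightarrow> 1 \<le> swap_pairs n v \<and> swap_pairs n v \<le> K"
  by (auto simp: swap_pairs_def split: if_splits; presburger)

lemma sw_range: "1 \<le> v \<Longrightarrow> v \<le> 2*n \<Longrightarrow> 1 \<le> swap_pairs n v \<and> swap_pairs n v \<le> 2*n"
  by (auto simp: swap_pairs_def split: if_splits; presburger)

lemma sw_perm: "swap_pairs n permutes {1..2*n}"
proof (rule bij_imp_permutes)
  show "bij_betw (swap_pairs n) {1..2*n} {1..2*n}"
  proof (rule bij_betw_byWitness[where f'="swap_pairs n"])
    show "swap_pairs n ` {1..2*n} \<subseteq> {1..2*n}" "swap_pairs n ` {1..2*n} \<subseteq> {1..2*n}"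
      using sw_range[of _ n] by (force simp: image_subset_iff)+
  qed (auto simp: sw_invol)
  show "\<And>x. x \<notin> {1..2*n} \<Longrightarrow> swap_pairs n x = x" by (auto simp: swap_pairs_def)
qed

lemma sw_dumont: "dumont1 n (swap_pairs n)"
  unfolding dumont1_def using sw_perm
  by (auto simp: swap_pairs_def split: if_splits; presburger)

lemma sw_inv: "i < j \<Longrightarrow> swap_pairs n j < swap_pairs n i \<Longrightarrow> j = i + 1"
  using sw_le[where n=n and v=i] sw_ge[where n=n and v=j] by linarith

lemma sw_avoid231: "\<not> contains_pattern m (swap_pairs n) [2,3,1]"
proof
  assume "contains_pattern m (swap_pairs n) [2,3,1]"
  then obtain idx where sm: "strict_mono_on {..<3} idx" and
    c: "\<forall>a<3. \<forall>b<3. swap_pairs n (idx a) < swap_pairs n (idx b) \<longleftrightarrow> [2::nat,3,1] ! a < [2,3,1] ! b"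
    unfolding contains_pattern_def by (metis length_Cons list.size(3) numeral_3_eq_3)
  have "idx 0 < idx 1" "idx 1 < idx 2" using sm unfolding strict_mono_on_def by auto
  moreover have "swap_pairs n (idx 2) < swap_pairs n (idx 0)" using c[rule_format, of 2 0] by simp
  ultimately show False using sw_inv[of "idx 0" "idx 2" n] by linarith
qed

lemma sw_avoid4213: "\<not> contains_pattern m (swap_pairs n) [4,2,1,3]"
proof
  assume "contains_pattern m (swap_pairs n) [4,2,1,3]"
  then obtain idx where sm: "strict_mono_on {..<4} idx" and
    c: "\<forall>a<4. \<forall>b<4. swap_pairs n (idx a) < swap_pairs n (idx b) \<longleftrightarrow> [4::nat,2,1,3] ! a < [4,2,1,3] ! b"
    unfolding contains_pattern_def by (metis length_Cons list.size(3) numeral_3_eq_3 Suc_numeral semiring_norm(2) semiring_norm(8))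
  have "idx 0 < idx 1" "idx 1 < idx 3" using sm unfolding strict_mono_on_def by auto
  moreover have "swap_pairs n (idx 3) < swap_pairs n (idx 0)" using c[rule_format, of 3 0] by simp
  ultimately show False using sw_inv[of "idx 0" "idx 3" n] by linarith
qed
lemma main:
  assumes d: "dumont1 n \<pi>" and a231: "\<not> contains_pattern (2*n) \<pi> [2,3,1]"
    and a4213: "\<not> contains_pattern (2*n) \<pi> [4,2,1,3]"
  shows "k \<le> n \<Longrightarrow> \<forall>j. 1 \<le> j \<and> j \<le> 2*k \<longrightarrow> \<pi> j = swap_pairs n j"
proof (induction k)
  case 0 show ?case by simp
next
  case (Suc k)
  define K where "K = 2*k"
  have IH: "\<And>j. 1 \<le> j \<Longrightarrow> j \<le> K \<Longrightarrow> \<pi> j = swap_pairs n j" using Suc unfolding K_def by auto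
  have kn: "K + 2 \<le> 2*n" using Suc.prems K_def by simp
  have evK: "even K" using K_def by simp
  have perm: "\<pi> permutes {1..2*n}" using d dumont1_def by auto
  have dm: "\<And>i. 1 \<le> i \<Longrightarrow> i \<le> 2*n \<Longrightarrow> (even (\<pi> i) \<longrightarrow> i < 2*n \<and> \<pi> i > \<pi> (i+1)) \<and> (odd (\<pi> i) \<longrightarrow> i = 2*n \<or> \<pi> i < \<pi> (i+1))"
    using d unfolding dumont1_def by auto
  have inj: "\<And>x y. \<pi> x = \<pi> y \<Longrightarrow> x = y" using permutes_inj[OF perm] by (meson injD)
  have rng: "\<And>i. 1 \<le> i \<Longrightarrow> i \<le> 2*n \<Longrightarrow> 1 \<le> \<pi> i \<and> \<pi> i \<le> 2*n"
    using permutes_in_image[OF perm] by auto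
  have surj: "\<And>v. 1 \<le> v \<Longrightarrow> v \<le> 2*n \<Longrightarrow> \<exists>i. 1 \<le> i \<and> i \<le> 2*n \<and> \<pi> i = v"
  proof -
    fix v :: nat assume "1 \<le> v" "v \<le> 2*n"
    then have "v \<in> \<pi> ` {1..2*n}" using permutes_image[OF perm] by auto
    then show "\<exists>i. 1 \<le> i \<and> i \<le> 2*n \<and> \<pi> i = v" by auto
  qed
  have big: "K < \<pi> j" if j: "K < j" "j \<le> 2*n" for j
  proof (rule ccontr)
    assume nj: "\<not> K < \<pi> j"
    let ?i = "swap_pairs n (\<pi> j)"
    have "1 \<le> \<pi> j" using rng j by auto
    then have i: "1 \<le> ?i" "?i \<le> K" using sw_K[of K "\<pi> j" n] nj kn evK by auto
    have "\<pi> ?i = \<pi> j" using IH[OF i] sw_invol by simp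
    then have "?i = j" using inj by blast
    then show False using i j by simp
  qed
  have pos: "K < i" if "K < v" "1 \<le> i" "\<pi> i = v" for v i
  proof (rule ccontr)
    assume "\<not> K < i"
    then have "\<pi> i = swap_pairs n i" using IH that by auto
    then show False using sw_K[of K i n] that evK kn \<open>\<not> K < i\<close> by auto
  qed
  obtain j where j: "1 \<le> j" "j \<le> 2*n" "\<pi> j = K+2" using surj kn by force
  have jK: "K < j" using pos[of "K+2" j] j by auto
  have j1: "j < 2*n" "\<pi> (j+1) < K+2" using dm[OF j(1,2)] j(3) evK by auto
  have "K < \<pi> (j+1)" using big jK j1 by auto
  hence pj1: "\<pi> (j+1) = K+1" using j1 by auto
  have jeq: "j = K+1"
  proof (rule ccontr)
    assume "j \<noteq> K+1"
    hence jK2: "K+2 \<le> j" using jK by auto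
    define e where "e = \<pi> (j-1)"
    have "K < e" using big[of "j-1"] jK2 j by (simp add: e_def)
    moreover have eK1: "e \<noteq> K+1" using inj[of "j-1" "j+1"] pj1 e_def jK2 by auto
    moreover have "e \<noteq> K+2" using inj[of "j-1" "j"] j e_def jK2 by auto
    moreover have "even e"
    proof (rule ccontr)
      assume "odd e"
      have jj: "1 \<le> j-1" "j-1 \<le> 2*n" "j-1 \<noteq> 2*n" using jK2 j by auto
      then have "e < \<pi> (j-1+1)" using dm[OF jj(1,2)] \<open>odd e\<close> e_def by auto
      then show False using jK2 j \<open>K < e\<close> eK1 by auto
    qed
    ultimately have e4: "K+4 \<le> e" using evK by presburger
    have "e \<le> 2*n" using rng[of "j-1"] jK2 j e_def by auto
    then obtain d where dd: "1 \<le> d" "d \<le> 2*n" "\<pi> d = K+3" using surj[of "K+3"] e4 by auto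
    have "K < d" using pos[of "K+3" d] dd by auto
    have "d \<noteq> j-1" using dd e4 e_def by auto
    moreover have "d \<noteq> j" "d \<noteq> j+1" using dd j pj1 by auto
    ultimately consider "d < j-1" | "j+1 < d" by linarith
    then show False
    proof cases
      case 1
      have "contains_pattern (2*n) \<pi> [2,3,1]"
        by (rule c231[of d "j-1" "j+1"]) (use 1 dd j1 pj1 e4 e_def jK2 in auto)
      then show False using a231 by simp
    next
      case 2
      have "contains_pattern (2*n) \<pi> [4,2,1,3]"
        by (rule c4213[of "j-1" j "j+1" d]) (use 2 dd j1 j pj1 e4 e_def jK2 in auto)
      then show False using a4213 by simp
    qed
  qed
  show ?case
  proof (intro allI impI)
    fix i assume i: "1 \<le> i \<and> i \<le> 2 * Suc k"
    then consider "i \<le> K" | "i = K+1" | "i = K+2" using K_def by fastforce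
    then show "\<pi> i = swap_pairs n i"
    proof cases
      case 1 then show ?thesis using IH i by auto
    next
      case 2 then show ?thesis using jeq j kn evK by (auto simp: swap_pairs_def)
    next
      case 3 then show ?thesis using jeq pj1 kn evK by (auto simp: swap_pairs_def)
    qed
  qed
qed

theorem theorem3p8:
  fixes n :: nat
  assumes "n \<ge> 1"
  shows "dumont1_avoid n {[2,3,1], [4,2,1,3]} = {swap_pairs n}"
proof
  show "{swap_pairs n} \<subseteq> dumont1_avoid n {[2,3,1], [4,2,1,3]}"
    using sw_dumont sw_avoid231 sw_avoid4213 by (auto simp: dumont1_avoid_def avoids_all_def)
  show "dumont1_avoid n {[2,3,1], [4,2,1,3]} \<subseteq> {swap_pairs n}"
  proof
    fix \<pi> assume "\<pi> \<in> dumont1_avoid n {[2,3,1], [4,2,1,3]}"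
    then have d: "dumont1 n \<pi>" and a1: "\<not> contains_pattern (2*n) \<pi> [2,3,1]"
      and a2: "\<not> contains_pattern (2*n) \<pi> [4,2,1,3]"
      by (auto simp: dumont1_avoid_def avoids_all_def)
    have perm: "\<pi> permutes {1..2*n}" using d dumont1_def by auto
    have M: "\<forall>j. 1 \<le> j \<and> j \<le> 2*n \<longrightarrow> \<pi> j = swap_pairs n j" using main[OF d a1 a2, of n] by simp
    have "\<pi> = swap_pairs n"
    proof
      fix x show "\<pi> x = swap_pairs n x"
      proof (cases "x \<in> {1..2*n}")
        case True then show ?thesis using M by auto
      next
        case False then show ?thesis using permutes_not_in[OF perm False] by (simp add: swap_pairs_def del: atLeastAtMost_iff)
      qed
    qed
    then show "\<pi> \<in> {swap_pairs n}" by simp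
  qed
qed
end
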